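(* Let $\Gamma=(V,E)$ be a simple graph of order $n$ and maximum degree $\Delta$. Then the global defensive alliance number of $\Gamma$ satisfies $$\gamma_{a}(\Gamma)\ge \left\lceil \frac{2n}{\Delta+3}\right\rceil$$ and the global strong defensive alliance number of $\Gamma$ satisfies $$\gamma_{\hat{a}}(\Gamma)\ge \left\lceil \frac{n}{\left\lfloor\frac{\Delta}{2}\right\rfloor+1}\right\rceil.$$
   Context: For $S\subseteq V$ and $v\in V$, $N_S(v)=\{u\in S: u\sim v\}$ and $N_{V\setminus S}(v)=\{u\in V\setminus S: u\sim v\}$. A nonempty set $S\subseteq V$ is a defensive alliance if $|N_S(v)|+1\ge |N_{V\setminus S}(v)|$ for every $v\in S$, and a strong defensive alliance if $|N_S(v)|\ge |N_{V\setminus S}(v)|$ for every $v\in S$. A (strong) defensive alliance is global if it is a dominating set, i.e. every vertex of $V\setminus S$ is adjacent to some vertex of $S$. $\gamma_a(\Gamma)$ (resp. $\gamma_{\hat a}(\Gamma)$) is the minimum cardinality of a global defensive (resp. global strong defensive) alliance. *)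

theory Defs
  imports Complex_Main
begin

definition simple_graph :: "'a set \<Rightarrow> ('a \<Rightarrow> 'a \<Rightarrow> bool) \<Rightarrow> bool" where
  "simple_graph V E \<longleftrightarrow> finite V \<and> (\<forall>u v. E u v \<longrightarrow> u \<in> V \<and> v \<in> V)
     \<and> (\<forall>u v. E u v \<longrightarrow> E v u) \<and> (\<forall>v. \<not> E v v)"

definition nbhd_in :: "('a \<Rightarrow> 'a \<Rightarrow> bool) \<Rightarrow> 'a set \<Rightarrow> 'a \<Rightarrow> 'a set" where
  "nbhd_in E S v = {u \<in> S. E u v}"

definition degree :: "'a set \<Rightarrow> ('a \<Rightarrow> 'a \<Rightarrow> bool) \<Rightarrow> 'a \<Rightarrow> nat" where
  "degree V E v = card (nbhd_in E V v)"

definition max_degree :: "'a set \<Rightarrow> ('a \<Rightarrow> 'a \<Rightarrow> bool) \<Rightarrow> nat" where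
  "max_degree V E = Max (degree V E ` V)"

definition defensive_alliance :: "'a set \<Rightarrow> ('a \<Rightarrow> 'a \<Rightarrow> bool) \<Rightarrow> 'a set \<Rightarrow> bool" where
  "defensive_alliance V E S \<longleftrightarrow> S \<noteq> {} \<and> S \<subseteq> V \<and>
     (\<forall>v\<in>S. card (nbhd_in E S v) + 1 \<ge> card (nbhd_in E (V - S) v))"

definition strong_defensive_alliance :: "'a set \<Rightarrow> ('a \<Rightarrow> 'a \<Rightarrow> bool) \<Rightarrow> 'a set \<Rightarrow> bool" where
  "strong_defensive_alliance V E S \<longleftrightarrow> S \<noteq> {} \<and> S \<subseteq> V \<and>
     (\<forall>v\<in>S. card (nbhd_in E S v) \<ge> card (nbhd_in E (V - S) v))"

definition dominating :: "'a set \<Rightarrow> ('a \<Rightarrow> 'a \<Rightarrow> bool) \<Rightarrow> 'a set \<Rightarrow> bool" where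
  "dominating V E S \<longleftrightarrow> S \<subseteq> V \<and> (\<forall>v\<in>V - S. \<exists>u\<in>S. E u v)"

definition global_defensive_alliance :: "'a set \<Rightarrow> ('a \<Rightarrow> 'a \<Rightarrow> bool) \<Rightarrow> 'a set \<Rightarrow> bool" where
  "global_defensive_alliance V E S \<longleftrightarrow> defensive_alliance V E S \<and> dominating V E S"

definition global_strong_defensive_alliance :: "'a set \<Rightarrow> ('a \<Rightarrow> 'a \<Rightarrow> bool) \<Rightarrow> 'a set \<Rightarrow> bool" where
  "global_strong_defensive_alliance V E S \<longleftrightarrow> strong_defensive_alliance V E S \<and> dominating V E S"

definition gda_number :: "'a set \<Rightarrow> ('a \<Rightarrow> 'a \<Rightarrow> bool) \<Rightarrow> nat" where
  "gda_number V E = Min (card ` {S. global_defensive_alliance V E S})"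

definition gsda_number :: "'a set \<Rightarrow> ('a \<Rightarrow> 'a \<Rightarrow> bool) \<Rightarrow> nat" where
  "gsda_number V E = Min (card ` {S. global_strong_defensive_alliance V E S})"

end

theory Submission
  imports Defs
begin

lemma swap_count:
  assumes "finite A" "finite B"
  shows "(\<Sum>u\<in>A. card {v\<in>B. R u v}) = (\<Sum>v\<in>B. card {u\<in>A. R u v})"
proof -
  have c: "\<And>C P. finite C \<Longrightarrow> card {x\<in>C. P x} = (\<Sum>x\<in>C. if P x then 1 else 0::nat)"
    by (simp add: sum.If_cases Int_def)
  have "(\<Sum>u\<in>A. card {v\<in>B. R u v}) = (\<Sum>u\<in>A. \<Sum>v\<in>B. if R u v then 1 else 0::nat)"
    using c[OF assms(2)] by simp
  also have "\<dots> = (\<Sum>v\<in>B. \<Sum>u\<in>A. if R u v then 1 else 0::nat)" by (rule sum.swap)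
  also have "\<dots> = (\<Sum>v\<in>B. card {u\<in>A. R u v})" using c[OF assms(1)] by simp
  finally show ?thesis .
qed

lemma key:
  assumes g: "simple_graph V E" and d: "dominating V E S"
    and k: "\<And>v. v \<in> S \<Longrightarrow> card (nbhd_in E (V - S) v) \<le> k"
  shows "card V \<le> card S * (k + 1)"
proof -
  have fV: "finite V" and sV: "S \<subseteq> V" using g d by (auto simp: simple_graph_def dominating_def)
  have fS: "finite S" using fV sV finite_subset by blast
  have sym: "\<And>u v. E u v \<Longrightarrow> E v u" using g by (auto simp: simple_graph_def)
  have fV_S: "finite (V - S)" using fV by simp
  have "card (V - S) \<le> (\<Sum>u\<in>V - S. card (nbhd_in E S u))"
  proof -
    have "\<And>u. u \<in> V - S \<Longrightarrow> 1 \<le> card (nbhd_in E S u)"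
    proof -
      fix u assume "u \<in> V - S"
      then obtain w where "w \<in> S" "E w u" using d by (auto simp: dominating_def)
      then have "nbhd_in E S u \<noteq> {}" by (auto simp: nbhd_in_def)
      moreover have "finite (nbhd_in E S u)" using fS by (simp add: nbhd_in_def)
      ultimately show "1 \<le> card (nbhd_in E S u)" by (simp add: Suc_le_eq card_gt_0_iff)
    qed
    then have "(\<Sum>u\<in>V - S. (1::nat)) \<le> (\<Sum>u\<in>V - S. card (nbhd_in E S u))" by (rule sum_mono)
    then show ?thesis by simp
  qed
  also have "\<dots> = (\<Sum>u\<in>V - S. card {v\<in>S. E v u})" by (simp add: nbhd_in_def)
  also have "\<dots> = (\<Sum>v\<in>S. card {u\<in>V - S. E v u})" using swap_count[OF fV_S fS, where R="\<lambda>u v. E v u"] by simp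
  also have "\<dots> = (\<Sum>v\<in>S. card (nbhd_in E (V - S) v))"
  proof (rule sum.cong[OF refl])
    fix v show "card {u \<in> V - S. E v u} = card (nbhd_in E (V - S) v)"
      unfolding nbhd_in_def using sym by (intro arg_cong[where f=card]) blast
  qed
  also have "\<dots> \<le> (\<Sum>v\<in>S. k)" using k by (rule sum_mono)
  also have "\<dots> = card S * k" by simp
  finally have "card (V - S) \<le> card S * k" .
  moreover have "card V = card (V - S) + card S" using fV sV
    by (metis card_Diff_subset fS card_mono le_add_diff_inverse2)
  ultimately show ?thesis by simp
qed

lemma deg_split:
  assumes g: "simple_graph V E" and sV: "S \<subseteq> V" and v: "v \<in> V"
  shows "card (nbhd_in E S v) + card (nbhd_in E (V - S) v) \<le> max_degree V E"
proof -
  have fV: "finite V" using g by (simp add: simple_graph_def)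
  have "nbhd_in E V v = nbhd_in E S v \<union> nbhd_in E (V - S) v" using sV by (auto simp: nbhd_in_def)
  moreover have "nbhd_in E S v \<inter> nbhd_in E (V - S) v = {}" by (auto simp: nbhd_in_def)
  moreover have "finite (nbhd_in E S v)"
    by (rule finite_subset[OF _ fV]) (use sV in \<open>auto simp: nbhd_in_def\<close>)
  moreover have "finite (nbhd_in E (V - S) v)"
    by (rule finite_subset[OF _ fV]) (auto simp: nbhd_in_def)
  ultimately have "card (nbhd_in E S v) + card (nbhd_in E (V - S) v) = degree V E v"
    unfolding degree_def by (metis card_Un_disjoint)
  also have "\<dots> \<le> max_degree V E" unfolding max_degree_def using fV v by simp
  finally show ?thesis .
qed

theorem theorem4:
  fixes V :: "'a set" and E :: "'a \<Rightarrow> 'a \<Rightarrow> bool"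
  assumes "simple_graph V E" and "V \<noteq> {}"
  shows "real (gda_number V E) \<ge> of_int \<lceil>2 * real (card V) / (real (max_degree V E) + 3)\<rceil>
       \<and> real (gsda_number V E) \<ge> of_int \<lceil>real (card V) / (real (max_degree V E div 2) + 1)\<rceil>"
proof -
  let ?D = "max_degree V E"
  have fV: "finite V" using assms by (simp add: simple_graph_def)
  have VV1: "global_defensive_alliance V E V"
    using assms by (auto simp: global_defensive_alliance_def defensive_alliance_def dominating_def nbhd_in_def)
  have VV2: "global_strong_defensive_alliance V E V"
    using assms by (auto simp: global_strong_defensive_alliance_def strong_defensive_alliance_def dominating_def nbhd_in_def)
  have F1: "finite (card ` {S. global_defensive_alliance V E S})"
    by (rule finite_imageI, rule finite_subset[of _ "Pow V"])
       (use fV in \<open>auto simp: global_defensive_alliance_def dominating_def\<close>)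
  have F2: "finite (card ` {S. global_strong_defensive_alliance V E S})"
    by (rule finite_imageI, rule finite_subset[of _ "Pow V"])
       (use fV in \<open>auto simp: global_strong_defensive_alliance_def dominating_def\<close>)
  obtain S1 where S1: "global_defensive_alliance V E S1" "gda_number V E = card S1"
    using Min_in[OF F1] VV1 unfolding gda_number_def by blast
  obtain S2 where S2: "global_strong_defensive_alliance V E S2" "gsda_number V E = card S2"
    using Min_in[OF F2] VV2 unfolding gsda_number_def by blast
  have A: "card V \<le> card S1 * ((?D + 1) div 2 + 1)"
  proof (rule key[OF assms(1)])
    show "dominating V E S1" using S1 by (simp add: global_defensive_alliance_def)
    fix v assume "v \<in> S1"
    moreover have "S1 \<subseteq> V" using S1 by (simp add: global_defensive_alliance_def defensive_alliance_def)
    ultimately have "card (nbhd_in E S1 v) + card (nbhd_in E (V - S1) v) \<le> ?D"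
      "card (nbhd_in E (V - S1) v) \<le> card (nbhd_in E S1 v) + 1"
      using deg_split[OF assms(1)] S1 by (auto simp: global_defensive_alliance_def defensive_alliance_def)
    then show "card (nbhd_in E (V - S1) v) \<le> (?D + 1) div 2" by linarith
  qed
  have B: "card V \<le> card S2 * (?D div 2 + 1)"
  proof (rule key[OF assms(1)])
    show "dominating V E S2" using S2 by (simp add: global_strong_defensive_alliance_def)
    fix v assume "v \<in> S2"
    moreover have "S2 \<subseteq> V" using S2 by (simp add: global_strong_defensive_alliance_def strong_defensive_alliance_def)
    ultimately have "card (nbhd_in E S2 v) + card (nbhd_in E (V - S2) v) \<le> ?D"
      "card (nbhd_in E (V - S2) v) \<le> card (nbhd_in E S2 v)"
      using deg_split[OF assms(1)] S2 by (auto simp: global_strong_defensive_alliance_def strong_defensive_alliance_def)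
    then show "card (nbhd_in E (V - S2) v) \<le> ?D div 2" by linarith
  qed
  have A2: "2 * card V \<le> card S1 * (?D + 3)"
  proof -
    have "2 * ((?D + 1) div 2 + 1) \<le> ?D + 3" by presburger
    then have "card S1 * (2 * ((?D + 1) div 2 + 1)) \<le> card S1 * (?D + 3)" by (rule mult_le_mono2)
    then show ?thesis using A by (simp add: algebra_simps)
  qed
  have A3: "2 * real (card V) \<le> real (card S1) * (real ?D + 3)"
    proof -
    have "real (2 * card V) \<le> real (card S1 * (?D + 3))" using A2 by (rule of_nat_mono)
    then show ?thesis by simp
  qed
  have B3: "real (card V) \<le> real (card S2) * (real (?D div 2) + 1)"
    proof -
    have "real (card V) \<le> real (card S2 * (?D div 2 + 1))" using B by (rule of_nat_mono)
    then show ?thesis by (simp add: algebra_simps)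
  qed
  have "2 * real (card V) / (real ?D + 3) \<le> real (card S1)"
    using A3 by (simp add: divide_le_eq)
  then have "\<lceil>2 * real (card V) / (real ?D + 3)\<rceil> \<le> int (card S1)"
    by (simp add: ceiling_le_iff)
  then have 1: "of_int \<lceil>2 * real (card V) / (real ?D + 3)\<rceil> \<le> real (card S1)"
    by (metis of_int_le_iff of_int_of_nat_eq)
  have "real (card V) / (real (?D div 2) + 1) \<le> real (card S2)"
    using B3 by (simp add: divide_le_eq)
  then have "\<lceil>real (card V) / (real (?D div 2) + 1)\<rceil> \<le> int (card S2)"
    by (simp add: ceiling_le_iff)
  then have 2: "of_int \<lceil>real (card V) / (real (?D div 2) + 1)\<rceil> \<le> real (card S2)"
    by (metis of_int_le_iff of_int_of_nat_eq)
  show ?thesis using 1 2 S1 S2 by simp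
qed

end
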